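(* For every $\varepsilon>0$ there exists $N\in\omega$ such that for every $n\geq N$ there is a set $A\subseteq 2^n$ with $\frac{|A|}{2^n}<\varepsilon$ having the following property: for every $u\subseteq n$ with $\frac{n}{4}\leq |u|\leq \frac{3n}{4}$, and all $B_0\subseteq 2^u$ and $B_1\subseteq 2^{n\setminus u}$ with $\frac{|B_0|}{2^{|u|}}\geq \frac12$ and $\frac{|B_1|}{2^{|n\setminus u|}}\geq\frac12$, we have $(B_0\times B_1)\cap A\neq\emptyset$.
   Context: Here $n=\{0,1,\dots,n-1\}$ and $2^a$ denotes the set of functions from $a$ to $\{0,1\}$. The product $B_0\times B_1$ is identified with the set of $s\in 2^n$ such that $s\restriction u\in B_0$ and $s\restriction (n\setminus u)\in B_1$. *)

theory Defs
  imports Complex_Main "HOL-Library.FuncSet"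
begin

text \<open>The set 2^a of functions from a to {0,1}, represented as extensional
  functions a \<rightarrow> bool (undefined outside a).\<close>
definition cube :: "nat set \<Rightarrow> (nat \<Rightarrow> bool) set" where
  "cube a = (a \<rightarrow>\<^sub>E (UNIV :: bool set))"

text \<open>B0 \<times> B1 as a subset of 2^n, for u \<subseteq> n.\<close>
definition box_prod :: "nat \<Rightarrow> nat set \<Rightarrow> (nat \<Rightarrow> bool) set \<Rightarrow> (nat \<Rightarrow> bool) set \<Rightarrow> (nat \<Rightarrow> bool) set" where
  "box_prod n u B0 B1 = {s \<in> cube {..<n}. restrict s u \<in> B0 \<and> restrict s ({..<n} - u) \<in> B1}"

end

theory Submission
  imports Defs "HOL-Real_Asymp.Real_Asymp"
begin

lemma card_cube: "finite a \<Longrightarrow> card (cube a) = 2 ^ card a"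
  by (simp add: cube_def card_PiE)

lemma finite_cube: "finite a \<Longrightarrow> finite (cube a)"
  by (simp add: cube_def finite_PiE)

lemma card_box_prod:
  assumes u: "u \<subseteq> {..<n}" and B0: "B0 \<subseteq> cube u" and B1: "B1 \<subseteq> cube ({..<n} - u)"
  shows "card (box_prod n u B0 B1) = card B0 * card B1"
proof -
  have "bij_betw (\<lambda>s. (restrict s u, restrict s ({..<n} - u))) (box_prod n u B0 B1) (B0 \<times> B1)"
  proof (rule bij_betwI[where g = "\<lambda>(a,b) i. if i \<in> u then a i else b i"])
    show "(\<lambda>s. (restrict s u, restrict s ({..<n} - u))) \<in> box_prod n u B0 B1 \<rightarrow> B0 \<times> B1"
      by (auto simp: box_prod_def)
    show "(\<lambda>(a, b) i. if i \<in> u then a i else b i) \<in> B0 \<times> B1 \<rightarrow> box_prod n u B0 B1"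
    proof
      fix p assume p: "p \<in> B0 \<times> B1"
      obtain a b where ab: "p = (a,b)" "a \<in> B0" "b \<in> B1" using p by (metis mem_Times_iff prod.collapse)
      have a: "a \<in> cube u" and b: "b \<in> cube ({..<n} - u)" using ab B0 B1 by auto
      let ?s = "\<lambda>i. if i \<in> u then a i else b i"
      have "?s \<in> cube {..<n}" using a b u unfolding cube_def by (auto simp: PiE_def extensional_def)
      moreover have "restrict ?s u = a" using a unfolding cube_def
        by (auto simp: PiE_def extensional_def restrict_def)
      moreover have "restrict ?s ({..<n} - u) = b" using b unfolding cube_def
        by (auto simp: PiE_def extensional_def restrict_def)
      ultimately show "(\<lambda>(a, b) i. if i \<in> u then a i else b i) p \<in> box_prod n u B0 B1"
        using ab by (simp add: box_prod_def)
    qed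
    show "(\<lambda>(a, b) i. if i \<in> u then a i else b i) (restrict s u, restrict s ({..<n} - u)) = s"
      if "s \<in> box_prod n u B0 B1" for s
    proof
      fix i
      have "s \<in> cube {..<n}" using that by (simp add: box_prod_def)
      then show "(\<lambda>(a, b) i. if i \<in> u then a i else b i) (restrict s u, restrict s ({..<n} - u)) i = s i"
        unfolding cube_def by (auto simp: PiE_def extensional_def)
    qed
    show "(restrict (case p of (a, b) \<Rightarrow> \<lambda>i. if i \<in> u then a i else b i) u,
           restrict (case p of (a, b) \<Rightarrow> \<lambda>i. if i \<in> u then a i else b i) ({..<n} - u)) = p"
      if pB: "p \<in> B0 \<times> B1" for p
    proof -
      obtain a b where ab: "p = (a,b)" "a \<in> B0" "b \<in> B1" using pB by auto
      have a: "a \<in> cube u" and b: "b \<in> cube ({..<n} - u)" using ab B0 B1 by auto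
      have "restrict (\<lambda>i. if i \<in> u then a i else b i) u = a" using a unfolding cube_def
        by (auto simp: PiE_def extensional_def restrict_def)
      moreover have "restrict (\<lambda>i. if i \<in> u then a i else b i) ({..<n} - u) = b" using b unfolding cube_def
        by (auto simp: PiE_def extensional_def restrict_def)
      ultimately show ?thesis using ab by simp
    qed
  qed
  then show ?thesis by (simp add: bij_betw_same_card card_cartesian_product)
qed

lemma asymp_part:
  fixes k :: nat
  shows "\<exists>N. \<forall>n\<ge>N. k \<le> n \<and> 3 * (n + 2 ^ (3 * n div 4 + 1) + 1) \<le> (2::nat) ^ (n - k)"
proof -
  have lim: "(\<lambda>n::nat. (3*real n+3+6*2 powr(3/4*real n))/2 powr real n) \<longlonglongrightarrow> 0"
    by real_asymp
  have "(1::real) / 2 ^ k > 0" by simp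
  from order_tendstoD(2)[OF lim this]
  have ev: "eventually (\<lambda>n. (3*real n+3+6*2 powr(3/4*real n))/2 powr real n < 1 / 2 ^ k) sequentially" .
  then obtain N0 where N0: "\<And>n. n \<ge> N0 \<Longrightarrow> (3*real n+3+6*2 powr(3/4*real n))/2 powr real n < 1 / 2 ^ k"
    by (auto simp: eventually_sequentially)
  show ?thesis
  proof (intro exI[of _ "max N0 k"] allI impI conjI)
    fix n assume n: "max N0 k \<le> n"
    then show "k \<le> n" by simp
    have h: "(3*real n+3+6*2 powr(3/4*real n))/2 powr real n < 1 / 2 ^ k" using N0 n by simp
    have p: "2 powr real n = 2 ^ n" by (simp add: powr_realpow)
    have nk: "(2::nat) ^ n = 2 ^ (n - k) * 2 ^ k" using n by (simp add: power_add[symmetric])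
    have rk: "real (2 ^ (n - k)) = 2 ^ n / 2 ^ k"
    proof -
      have "real ((2::nat) ^ n) = real (2 ^ (n - k)) * 2 ^ k" using nk by (metis of_nat_mult of_nat_numeral of_nat_power)
      then show ?thesis by (simp add: field_simps)
    qed
    have j: "real (3 * n div 4) \<le> 3/4 * real n" by linarith
    have "real ((2::nat) ^ (3 * n div 4)) = 2 powr real (3 * n div 4)" by (simp add: powr_realpow)
    also have "\<dots> \<le> 2 powr (3/4 * real n)" using j by (intro powr_mono) auto
    finally have jj: "real ((2::nat) ^ (3 * n div 4)) \<le> 2 powr (3/4 * real n)" .
    have "real (3 * (n + 2 ^ (3 * n div 4 + 1) + 1)) = 3 * real n + 3 + 6 * real ((2::nat) ^ (3 * n div 4))"
      by simp
    also have "\<dots> \<le> 3*real n+3+6*2 powr(3/4*real n)" using jj by simp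
    also have "\<dots> < 2 ^ n / 2 ^ k" using h p by (simp add: field_simps)
    also have "\<dots> = real (2 ^ (n - k))" using rk by simp
    finally show "3 * (n + 2 ^ (3 * n div 4 + 1) + 1) \<le> (2::nat) ^ (n - k)" by linarith
  qed
qed

lemma pow_ineq:
  assumes "3 * t \<le> m"
  shows "2 ^ t * 3 ^ m \<le> (4::nat) ^ m"
proof -
  have a: "(2::nat) ^ t * 3 ^ (3 * t) \<le> 4 ^ (3 * t)"
  proof -
    have "(2::nat) ^ t * 3 ^ (3 * t) = 54 ^ t" by (simp add: power_mult power_mult_distrib[symmetric])
    also have "\<dots> \<le> 64 ^ t" by (simp add: power_mono)
    also have "\<dots> = 4 ^ (3 * t)" by (simp add: power_mult)
    finally show ?thesis .
  qed
  have b: "(3::nat) ^ (m - 3 * t) \<le> 4 ^ (m - 3 * t)" by (simp add: power_mono)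
  have "(2::nat) ^ t * 3 ^ m = (2 ^ t * 3 ^ (3 * t)) * 3 ^ (m - 3 * t)"
    using assms by (simp add: power_add[symmetric])
  also have "\<dots> \<le> 4 ^ (3 * t) * 4 ^ (m - 3 * t)" using a b by (rule mult_le_mono)
  also have "\<dots> = 4 ^ m" using assms by (simp add: power_add[symmetric])
  finally show ?thesis .
qed

theorem mainTheorem1:
  fixes \<epsilon> :: real
  assumes "\<epsilon> > 0"
  shows "\<exists>N::nat. \<forall>n\<ge>N. \<exists>A \<subseteq> cube {..<n}.
           real (card A) / 2 ^ n < \<epsilon> \<and>
           (\<forall>u \<subseteq> {..<n}. real n / 4 \<le> real (card u) \<and> real (card u) \<le> 3 * real n / 4 \<longrightarrow>
              (\<forall>B0 \<subseteq> cube u. \<forall>B1 \<subseteq> cube ({..<n} - u).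
                 real (card B0) / 2 ^ card u \<ge> 1/2 \<and> real (card B1) / 2 ^ card ({..<n} - u) \<ge> 1/2 \<longrightarrow>
                 box_prod n u B0 B1 \<inter> A \<noteq> {}))"
proof -
  obtain k :: nat where k: "1 / 2 ^ k < \<epsilon>"
  proof -
    obtain k where "(1/2::real) ^ k < \<epsilon>"
      using real_arch_pow_inv[of \<epsilon> "1/2"] assms by auto
    then show ?thesis using that by (simp add: power_one_over)
  qed
  obtain N where N: "\<And>n. n \<ge> N \<Longrightarrow> k \<le> n \<and> 3 * (n + 2 ^ (3 * n div 4 + 1) + 1) \<le> (2::nat) ^ (n - k)"
    using asymp_part[of k] by blast
  show ?thesis
  proof (intro exI[of _ N] allI impI)
    fix n assume "N \<le> n"
    note Nn = N[OF this]
    define j where "j = 3 * n div 4"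
    define m where "m = (2::nat) ^ (n - k)"
    define X where "X = cube {..<n}"
    define M where "M = card X"
    have M: "M = 2 ^ n" by (simp add: M_def X_def card_cube)
    have finX: "finite X" by (simp add: X_def finite_cube)
    define U where "U = {u \<in> Pow {..<n}. card u \<le> j \<and> n - card u \<le> j}"
    define T where "T = Sigma U (\<lambda>u. Pow (cube u) \<times> Pow (cube ({..<n} - u)))"
    define T' where "T' = {(u, B0, B1) \<in> T. 2 ^ card u \<le> 2 * card B0 \<and> 2 ^ (n - card u) \<le> 2 * card B1}"
    define Tup where "Tup = ({..<m} \<rightarrow>\<^sub>E X)"
    define bad where "bad = (\<lambda>(u, B0, B1). {t \<in> Tup. \<forall>i<m. t i \<notin> box_prod n u B0 B1})"
    have finU: "finite U" by (simp add: U_def)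
    have finT: "finite T" unfolding T_def using finU
      by (intro finite_SigmaI) (auto simp: U_def intro!: finite_cube intro: finite_subset)
    have cardT: "card T \<le> 2 ^ n * (2 ^ 2 ^ j * 2 ^ 2 ^ j)"
    proof -
      have "card T = (\<Sum>u\<in>U. card (Pow (cube u) \<times> Pow (cube ({..<n} - u))))"
        unfolding T_def using finU
        by (intro card_SigmaI) (auto simp: U_def intro!: finite_cube intro: finite_subset)
      also have "\<dots> \<le> (\<Sum>u\<in>U. 2 ^ 2 ^ j * 2 ^ 2 ^ j)"
      proof (rule sum_mono)
        fix u assume u: "u \<in> U"
        then have fu: "finite u" and su: "u \<subseteq> {..<n}" by (auto simp: U_def finite_subset)
        have cu: "card ({..<n} - u) = n - card u" using su by (simp add: card_Diff_subset fu)
        have "card (Pow (cube u) \<times> Pow (cube ({..<n} - u))) = 2 ^ 2 ^ card u * 2 ^ 2 ^ (n - card u)"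
          using fu cu by (simp add: card_cartesian_product card_Pow finite_cube card_cube)
        also have "\<dots> \<le> 2 ^ 2 ^ j * 2 ^ 2 ^ j" using u unfolding U_def
          by (intro mult_le_mono power_increasing) auto
        finally show "card (Pow (cube u) \<times> Pow (cube ({..<n} - u))) \<le> 2 ^ 2 ^ j * 2 ^ 2 ^ j" .
      qed
      also have "\<dots> = card U * (2 ^ 2 ^ j * 2 ^ 2 ^ j)" by simp
      also have "\<dots> \<le> 2 ^ n * (2 ^ 2 ^ j * 2 ^ 2 ^ j)"
      proof -
        have "card U \<le> card (Pow {..<n::nat})" by (rule card_mono) (auto simp: U_def)
        then show ?thesis by (simp add: card_Pow)
      qed
      finally show ?thesis .
    qed
    have cardbad: "4 ^ m * card (bad \<tau>) \<le> 3 ^ m * M ^ m" if "\<tau> \<in> T'" for \<tau>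
    proof -
      obtain u B0 B1 where tau: "\<tau> = (u, B0, B1)" by (cases \<tau>) auto
      have su: "u \<subseteq> {..<n}" and sB0: "B0 \<subseteq> cube u" and sB1: "B1 \<subseteq> cube ({..<n} - u)"
        and d0: "2 ^ card u \<le> 2 * card B0" and d1: "2 ^ (n - card u) \<le> 2 * card B1"
        using that by (auto simp: tau T'_def T_def U_def)
      have fu: "finite u" using su finite_subset by blast
      let ?Q = "box_prod n u B0 B1"
      have cQ: "card ?Q = card B0 * card B1" using card_box_prod[OF su sB0 sB1] .
      have "(2::nat) ^ n = 2 ^ card u * 2 ^ (n - card u)"
        using card_mono[OF _ su] by (simp add: power_add[symmetric])
      also have "\<dots> \<le> (2 * card B0) * (2 * card B1)" using d0 d1 by (rule mult_le_mono)
      finally have Q4: "M \<le> 4 * card ?Q" using cQ M by simp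
      have QX: "?Q \<subseteq> X" by (auto simp: box_prod_def X_def)
      have cXQ: "card (X - ?Q) = M - card ?Q" using QX finX M_def by (simp add: card_Diff_subset finite_subset)
      have "bad \<tau> = ({..<m} \<rightarrow>\<^sub>E (X - ?Q))" by (auto simp: bad_def tau Tup_def PiE_def Pi_def)
      then have "card (bad \<tau>) = (M - card ?Q) ^ m" by (simp add: card_PiE cXQ)
      then have "4 ^ m * card (bad \<tau>) = (4 * (M - card ?Q)) ^ m" by (simp add: power_mult_distrib)
      also have "\<dots> \<le> (3 * M) ^ m" using Q4 by (intro power_mono) auto
      finally show ?thesis by (simp add: power_mult_distrib)
    qed
    have finTup: "finite Tup" by (simp add: Tup_def finX finite_PiE)
    have cardTup: "card Tup = M ^ m" by (simp add: Tup_def card_PiE M_def)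
    have T'T: "T' \<subseteq> T" by (auto simp: T'_def)
    have "4 ^ m * card (\<Union>\<tau>\<in>T'. bad \<tau>) \<le> 4 ^ m * (\<Sum>\<tau>\<in>T'. card (bad \<tau>))"
      using card_UN_le[of T' bad] finT T'T finite_subset by (intro mult_le_mono2) blast
    also have "\<dots> = (\<Sum>\<tau>\<in>T'. 4 ^ m * card (bad \<tau>))" by (simp add: sum_distrib_left)
    also have "\<dots> \<le> (\<Sum>\<tau>\<in>T'. 3 ^ m * M ^ m)" using cardbad by (rule sum_mono)
    also have "\<dots> = card T' * 3 ^ m * M ^ m" by simp
    also have "\<dots> \<le> card T * 3 ^ m * M ^ m" using card_mono[OF finT T'T] by simp
    also have "\<dots> \<le> 2 ^ n * (2 ^ 2 ^ j * 2 ^ 2 ^ j) * 3 ^ m * M ^ m" using cardT by simp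
    also have "\<dots> < 4 ^ m * M ^ m"
    proof -
      have e: "(2::nat) ^ n * (2 ^ 2 ^ j * 2 ^ 2 ^ j) = 2 ^ (n + 2 ^ (j + 1))"
        by (simp add: power_add[symmetric] mult_2)
      have "2 ^ (n + 2 ^ (j + 1) + 1) * 3 ^ m \<le> (4::nat) ^ m"
        using Nn by (intro pow_ineq) (simp add: m_def j_def)
      then have "2 * (2 ^ (n + 2 ^ (j + 1)) * 3 ^ m) \<le> (4::nat) ^ m" by simp
      moreover have "0 < (2::nat) ^ (n + 2 ^ (j + 1)) * 3 ^ m" by simp
      ultimately have "2 ^ (n + 2 ^ (j + 1)) * 3 ^ m < (4::nat) ^ m" by linarith
      moreover have "M ^ m > 0" using M by simp
      ultimately show ?thesis using e by (simp add: mult.assoc)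
    qed
    finally have "card (\<Union>\<tau>\<in>T'. bad \<tau>) < card Tup" using cardTup by simp
    moreover have sub: "(\<Union>\<tau>\<in>T'. bad \<tau>) \<subseteq> Tup" by (auto simp: bad_def split: prod.splits)
    ultimately have "card (Tup - (\<Union>\<tau>\<in>T'. bad \<tau>)) > 0"
      using card_Diff_subset[OF finite_subset[OF sub finTup] sub] by simp
    then have "Tup - (\<Union>\<tau>\<in>T'. bad \<tau>) \<noteq> {}" by (metis card.empty less_irrefl)
    then obtain t where t: "t \<in> Tup" "t \<notin> (\<Union>\<tau>\<in>T'. bad \<tau>)" by blast
    define A where "A = t ` {..<m}"
    show "\<exists>A \<subseteq> cube {..<n}.
           real (card A) / 2 ^ n < \<epsilon> \<and>
           (\<forall>u \<subseteq> {..<n}. real n / 4 \<le> real (card u) \<and> real (card u) \<le> 3 * real n / 4 \<longrightarrow>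
              (\<forall>B0 \<subseteq> cube u. \<forall>B1 \<subseteq> cube ({..<n} - u).
                 real (card B0) / 2 ^ card u \<ge> 1/2 \<and> real (card B1) / 2 ^ card ({..<n} - u) \<ge> 1/2 \<longrightarrow>
                 box_prod n u B0 B1 \<inter> A \<noteq> {}))"
    proof (intro exI[of _ A] conjI allI impI)
      show "A \<subseteq> cube {..<n}" using t(1) by (auto simp: A_def Tup_def X_def)
      have "card A \<le> m" unfolding A_def using card_image_le[of "{..<m}" t] by simp
      then have "real (card A) / 2 ^ n \<le> real m / 2 ^ n" by (simp add: divide_right_mono)
      also have "real m / 2 ^ n = 1 / 2 ^ k"
      proof -
        have "(2::nat) ^ n = m * 2 ^ k" using Nn by (simp add: m_def power_add[symmetric])
        then have "real ((2::nat) ^ n) = real m * 2 ^ k" by (metis of_nat_mult of_nat_numeral of_nat_power)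
        moreover have "m > 0" by (simp add: m_def)
        ultimately show ?thesis by (simp add: field_simps)
      qed
      finally show "real (card A) / 2 ^ n < \<epsilon>" using k by linarith
    next
      fix u B0 B1
      assume su: "u \<subseteq> {..<n}" and bal: "real n / 4 \<le> real (card u) \<and> real (card u) \<le> 3 * real n / 4"
        and sB0: "B0 \<subseteq> cube u" and sB1: "B1 \<subseteq> cube ({..<n} - u)"
        and den: "real (card B0) / 2 ^ card u \<ge> 1/2 \<and> real (card B1) / 2 ^ card ({..<n} - u) \<ge> 1/2"
      have fu: "finite u" using su finite_subset by blast
      have cu: "card ({..<n} - u) = n - card u" using su by (simp add: card_Diff_subset fu)
      have cun: "card u \<le> n" using card_mono[OF _ su] by simp
      have c1: "4 * card u \<le> 3 * n" using bal by linarith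
      have c2: "n \<le> 4 * card u" using bal by linarith
      have c3: "card u \<le> 3 * n div 4" using c1 by presburger
      have c4: "n - card u \<le> 3 * n div 4" using c2 cun by presburger
      have "u \<in> U" using su c3 c4 unfolding U_def j_def by auto
      moreover have "2 ^ card u \<le> 2 * card B0"
      proof -
        have "real (2 ^ card u) \<le> real (2 * card B0)" using den by (simp add: field_simps)
        then show ?thesis by linarith
      qed
      moreover have "2 ^ (n - card u) \<le> 2 * card B1"
      proof -
        have "real (2 ^ (n - card u)) \<le> real (2 * card B1)" using den cu by (simp add: field_simps)
        then show ?thesis by linarith
      qed
      ultimately have "(u, B0, B1) \<in> T'" using sB0 sB1 by (simp add: T'_def T_def)
      then have "t \<notin> bad (u, B0, B1)" using t(2) by blast
      then obtain i where "i < m" "t i \<in> box_prod n u B0 B1" using t(1) by (auto simp: bad_def)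
      then show "box_prod n u B0 B1 \<inter> A \<noteq> {}" by (auto simp: A_def)
    qed
  qed
qed

end
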